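(* Let $\Omega\subset\mathbb{R}^n$ be a bounded domain that is star-shaped with respect to a point $x^*\in\Omega$, let $g\in C(\Omega)$, and let $u=SS^+(g)$ be the upper star-shaped envelope of $g$ with respect to $x^*$. Then $u$ is the viscosity solution of the obstacle problem \[ \min\{u(x)-g(x),\ (x-x^* )\cdot\nabla u(x)\}=0 \quad\text{in }\Omega, \] together with $u(x^* )=g(x^* )$.
   Context: A set $S$ is star-shaped with respect to $x^*$ if $x\in S$ implies $tx^*+(1-t)x\in S$ for all $t\in[0,1]$; a function $v:\Omega\to\mathbb{R}$ is star-shaped with respect to $x^*$ if all its sublevel sets $\{v\le\alpha\}$ are. $SS^+(g)(x)=\inf\{v(x)\mid v:\Omega\to\mathbb{R}\text{ star-shaped w.r.t. } x^*,\ v\ge g\}$. For $F(x,r,p)$, an upper (lower) semicontinuous $u$ is a viscosity subsolution (supersolution) of $F[u]=0$ in $\Omega$ if for every $\phi\in C^1(\Omega)$, whenever $u-\phi$ has a local maximum (minimum) at $x\in\Omega$, $F(x,u(x),\nabla\phi(x))\le 0$ ($\ge 0$); a viscosity solution is both. Here $F(x,r,p)=\min\{r-g(x),(x-x^* )\cdot p\}$. *)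

theory Defs
  imports "HOL-Analysis.Analysis"
begin

definition star_shaped_set :: "'a::real_vector set \<Rightarrow> 'a \<Rightarrow> bool" where
  "star_shaped_set S xs \<longleftrightarrow>
     (\<forall>x\<in>S. \<forall>t::real. 0 \<le> t \<and> t \<le> 1 \<longrightarrow> t *\<^sub>R xs + (1 - t) *\<^sub>R x \<in> S)"

definition star_shaped_fun :: "'a::real_vector set \<Rightarrow> 'a \<Rightarrow> ('a \<Rightarrow> real) \<Rightarrow> bool" where
  "star_shaped_fun \<Omega> xs v \<longleftrightarrow> (\<forall>\<alpha>. star_shaped_set {x\<in>\<Omega>. v x \<le> \<alpha>} xs)"

definition SS_plus :: "'a::real_vector set \<Rightarrow> 'a \<Rightarrow> ('a \<Rightarrow> real) \<Rightarrow> 'a \<Rightarrow> real" where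
  "SS_plus \<Omega> xs g x =
     Inf {v x | v. star_shaped_fun \<Omega> xs v \<and> (\<forall>y\<in>\<Omega>. g y \<le> v y)}"

definition usc_on :: "'a::topological_space set \<Rightarrow> ('a \<Rightarrow> real) \<Rightarrow> bool" where
  "usc_on \<Omega> u \<longleftrightarrow> (\<forall>x\<in>\<Omega>. \<forall>a. u x < a \<longrightarrow> eventually (\<lambda>y. u y < a) (at x within \<Omega>))"

definition lsc_on :: "'a::topological_space set \<Rightarrow> ('a \<Rightarrow> real) \<Rightarrow> bool" where
  "lsc_on \<Omega> u \<longleftrightarrow> (\<forall>x\<in>\<Omega>. \<forall>a. a < u x \<longrightarrow> eventually (\<lambda>y. a < u y) (at x within \<Omega>))"

definition C1_grad :: "'a::euclidean_space set \<Rightarrow> ('a \<Rightarrow> real) \<Rightarrow> ('a \<Rightarrow> 'a) \<Rightarrow> bool" where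
  "C1_grad \<Omega> \<phi> D\<phi> \<longleftrightarrow>
     (\<forall>x\<in>\<Omega>. (\<phi> has_derivative (\<lambda>h. D\<phi> x \<bullet> h)) (at x)) \<and> continuous_on \<Omega> D\<phi>"

definition local_max_on :: "'a::metric_space set \<Rightarrow> ('a \<Rightarrow> real) \<Rightarrow> 'a \<Rightarrow> bool" where
  "local_max_on \<Omega> w x \<longleftrightarrow> (\<exists>e>0. \<forall>y\<in>\<Omega> \<inter> ball x e. w y \<le> w x)"

definition local_min_on :: "'a::metric_space set \<Rightarrow> ('a \<Rightarrow> real) \<Rightarrow> 'a \<Rightarrow> bool" where
  "local_min_on \<Omega> w x \<longleftrightarrow> (\<exists>e>0. \<forall>y\<in>\<Omega> \<inter> ball x e. w x \<le> w y)"

definition visc_subsol ::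
  "'a::euclidean_space set \<Rightarrow> ('a \<Rightarrow> real \<Rightarrow> 'a \<Rightarrow> real) \<Rightarrow> ('a \<Rightarrow> real) \<Rightarrow> bool" where
  "visc_subsol \<Omega> F u \<longleftrightarrow> usc_on \<Omega> u \<and>
     (\<forall>\<phi> D\<phi> x. C1_grad \<Omega> \<phi> D\<phi> \<and> x \<in> \<Omega> \<and> local_max_on \<Omega> (\<lambda>y. u y - \<phi> y) x
        \<longrightarrow> F x (u x) (D\<phi> x) \<le> 0)"

definition visc_supersol ::
  "'a::euclidean_space set \<Rightarrow> ('a \<Rightarrow> real \<Rightarrow> 'a \<Rightarrow> real) \<Rightarrow> ('a \<Rightarrow> real) \<Rightarrow> bool" where
  "visc_supersol \<Omega> F u \<longleftrightarrow> lsc_on \<Omega> u \<and>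
     (\<forall>\<phi> D\<phi> x. C1_grad \<Omega> \<phi> D\<phi> \<and> x \<in> \<Omega> \<and> local_min_on \<Omega> (\<lambda>y. u y - \<phi> y) x
        \<longrightarrow> F x (u x) (D\<phi> x) \<ge> 0)"

definition visc_sol ::
  "'a::euclidean_space set \<Rightarrow> ('a \<Rightarrow> real \<Rightarrow> 'a \<Rightarrow> real) \<Rightarrow> ('a \<Rightarrow> real) \<Rightarrow> bool" where
  "visc_sol \<Omega> F u \<longleftrightarrow> visc_subsol \<Omega> F u \<and> visc_supersol \<Omega> F u"

definition F_obst :: "('a::euclidean_space \<Rightarrow> real) \<Rightarrow> 'a \<Rightarrow> 'a \<Rightarrow> real \<Rightarrow> 'a \<Rightarrow> real" where
  "F_obst g xs x r p = min (r - g x) ((x - xs) \<bullet> p)"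

end

theory Submission
  imports Defs
begin

definition env :: "'a::euclidean_space \<Rightarrow> ('a \<Rightarrow> real) \<Rightarrow> 'a \<Rightarrow> real" where
  "env xs g x = Sup (g ` closed_segment xs x)"

lemma seg_in:
  assumes star: "star_shaped_set \<Omega> xs" and y: "y \<in> \<Omega>" and z: "z \<in> closed_segment xs y"
  shows "z \<in> \<Omega>"
proof -
  obtain s where s: "0 \<le> s" "s \<le> 1" "z = (1 - s) *\<^sub>R xs + s *\<^sub>R y"
    using z by (auto simp: in_segment)
  have "(1 - s) *\<^sub>R xs + (1 - (1 - s)) *\<^sub>R y \<in> \<Omega>"
  proof -
    have "0 \<le> 1 - s \<and> 1 - s \<le> 1" using s by simp
    then show ?thesis using star y unfolding star_shaped_set_def by blast
  qed
  then show ?thesis using s by simp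
qed

lemma env_max:
  assumes star: "star_shaped_set \<Omega> xs" and g: "continuous_on \<Omega> g" and y: "y \<in> \<Omega>"
  shows "(\<exists>z\<in>closed_segment xs y. g z = env xs g y) \<and> (\<forall>w\<in>closed_segment xs y. g w \<le> env xs g y)"
proof -
  have sub: "closed_segment xs y \<subseteq> \<Omega>" using seg_in[OF star y] by blast
  have "continuous_on (closed_segment xs y) g" using continuous_on_subset[OF g sub] .
  then obtain z where z: "z \<in> closed_segment xs y" "\<forall>w\<in>closed_segment xs y. g w \<le> g z"
    using continuous_attains_sup[of "closed_segment xs y" g] by auto
  have "env xs g y = g z" unfolding env_def
    by (rule cSup_eq_maximum) (use z in auto)
  then show ?thesis using z by auto
qed

lemma SS_eq:
  assumes star: "star_shaped_set \<Omega> xs" and g: "continuous_on \<Omega> g" and x: "x \<in> \<Omega>"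
  shows "SS_plus \<Omega> xs g x = env xs g x"
  unfolding SS_plus_def
proof (rule cInf_eq_minimum)
  have "star_shaped_fun \<Omega> xs (env xs g)"
    unfolding star_shaped_fun_def star_shaped_set_def
  proof (intro allI ballI impI)
    fix \<alpha> y and t :: real
    assume y: "y \<in> {x \<in> \<Omega>. env xs g x \<le> \<alpha>}" and t: "0 \<le> t \<and> t \<le> 1"
    let ?w = "t *\<^sub>R xs + (1 - t) *\<^sub>R y"
    have yO: "y \<in> \<Omega>" using y by auto
    have wseg: "?w \<in> closed_segment xs y"
      unfolding in_segment using t by (intro exI[of _ "1 - t"]) auto
    have wO: "?w \<in> \<Omega>" using seg_in[OF star yO wseg] .
    have sub: "closed_segment xs ?w \<subseteq> closed_segment xs y"
      using wseg by (simp add: subset_closed_segment)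
    obtain z where z: "z \<in> closed_segment xs ?w" "g z = env xs g ?w"
      using env_max[OF star g wO] by auto
    have "g z \<le> env xs g y" using env_max[OF star g yO] z sub by blast
    then show "?w \<in> {x \<in> \<Omega>. env xs g x \<le> \<alpha>}" using wO y z by force
  qed
  moreover have "\<forall>y\<in>\<Omega>. g y \<le> env xs g y" using env_max[OF star g] by auto
  ultimately show "env xs g x \<in> {v x |v. star_shaped_fun \<Omega> xs v \<and> (\<forall>y\<in>\<Omega>. g y \<le> v y)}"
    by blast
next
  fix r assume "r \<in> {v x |v. star_shaped_fun \<Omega> xs v \<and> (\<forall>y\<in>\<Omega>. g y \<le> v y)}"
  then obtain v where r: "r = v x" and v: "star_shaped_fun \<Omega> xs v" "\<forall>y\<in>\<Omega>. g y \<le> v y" by auto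
  obtain z where z: "z \<in> closed_segment xs x" "g z = env xs g x"
    using env_max[OF star g x] by auto
  obtain s where s: "0 \<le> s" "s \<le> 1" "z = (1 - s) *\<^sub>R xs + s *\<^sub>R x"
    using z by (auto simp: in_segment)
  have "(1 - s) *\<^sub>R xs + (1 - (1 - s)) *\<^sub>R x \<in> {y \<in> \<Omega>. v y \<le> v x}"
  proof -
    have "0 \<le> 1 - s \<and> 1 - s \<le> 1" using s by simp
    moreover have "x \<in> {y \<in> \<Omega>. v y \<le> v x}" using x by simp
    ultimately show ?thesis using v(1) unfolding star_shaped_fun_def star_shaped_set_def by blast
  qed
  then have "z \<in> \<Omega>" "v z \<le> v x" using s by auto
  then show "env xs g x \<le> r" using v(2) z r by force
qed

lemma env_cont:
  assumes op: "open \<Omega>" and star: "star_shaped_set \<Omega> xs" and g: "continuous_on \<Omega> g"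
    and x: "x \<in> \<Omega>" and e: "e > 0"
  shows "\<exists>d>0. \<forall>y\<in>\<Omega>. dist y x < d \<longrightarrow> \<bar>env xs g y - env xs g x\<bar> < e"
proof -
  obtain r where r: "r > 0" "cball x r \<subseteq> \<Omega>" using op x open_contains_cball by blast
  define P where "P = (\<lambda>p::real \<times> 'a. (1 - fst p) *\<^sub>R xs + fst p *\<^sub>R snd p)"
  define K where "K = P ` ({0..1} \<times> cball x r)"
  have cK: "compact K" unfolding K_def
    by (rule compact_continuous_image) (auto simp: P_def intro!: continuous_intros compact_Times)
  have KO: "K \<subseteq> \<Omega>"
  proof
    fix k assume "k \<in> K"
    then obtain s y where sy: "s \<in> {0..1}" "y \<in> cball x r" "k = P (s, y)" unfolding K_def by auto
    have "k \<in> closed_segment xs y" using sy unfolding P_def in_segment by auto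
    then show "k \<in> \<Omega>" using seg_in[OF star _] sy r by blast
  qed
  have "uniformly_continuous_on K g"
    using compact_uniformly_continuous[OF continuous_on_subset[OF g KO] cK] .
  then obtain d0 where d0: "d0 > 0" "\<forall>a\<in>K. \<forall>b\<in>K. dist b a < d0 \<longrightarrow> dist (g b) (g a) < e"
    unfolding uniformly_continuous_on_def using e by metis
  have key: "\<bar>g (P (s, y)) - g (P (s, x))\<bar> < e"
    if s: "s \<in> {0..1}" and y: "dist y x < min r d0" for s y
  proof -
    have yK: "P (s, y) \<in> K" using s y unfolding K_def by (auto simp: dist_commute)
    have xK: "P (s, x) \<in> K" using s r unfolding K_def by auto
    have "P (s, y) - P (s, x) = s *\<^sub>R (y - x)" unfolding P_def by (simp add: algebra_simps)
    then have "dist (P (s, y)) (P (s, x)) = s * dist y x"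
      using s by (simp add: dist_norm)
    also have "\<dots> \<le> dist y x" using s by (simp add: mult_left_le_one_le)
    also have "\<dots> < d0" using y by simp
    finally show ?thesis using d0(2) xK yK by (simp add: dist_real_def)
  qed
  show ?thesis
  proof (intro exI[of _ "min r d0"] conjI ballI impI)
    show "0 < min r d0" using r d0 by simp
    fix y assume yO: "y \<in> \<Omega>" and y: "dist y x < min r d0"
    obtain z1 where z1: "z1 \<in> closed_segment xs y" "g z1 = env xs g y"
      using env_max[OF star g yO] by auto
    obtain s1 where s1: "s1 \<in> {0..1}" "z1 = P (s1, y)" using z1 unfolding in_segment P_def by auto
    have "P (s1, x) \<in> closed_segment xs x" unfolding P_def in_segment using s1 by auto
    then have "g (P (s1, x)) \<le> env xs g x"
      using env_max[OF star g x] by auto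
    then have A: "env xs g y < env xs g x + e" using key[OF s1(1) y] z1 s1 by auto
    obtain z2 where z2: "z2 \<in> closed_segment xs x" "g z2 = env xs g x"
      using env_max[OF star g x] by auto
    obtain s2 where s2: "s2 \<in> {0..1}" "z2 = P (s2, x)" using z2 unfolding in_segment P_def by auto
    have "P (s2, y) \<in> closed_segment xs y" unfolding P_def in_segment using s2 by auto
    then have "g (P (s2, y)) \<le> env xs g y"
      using env_max[OF star g yO] by auto
    then have B: "env xs g x < env xs g y + e" using key[OF s2(1) y] z2 s2 by auto
    show "\<bar>env xs g y - env xs g x\<bar> < e" using A B by linarith
  qed
qed

lemma deriv_dir:
  fixes \<phi> :: "'a::euclidean_space \<Rightarrow> real"
  assumes D: "(\<phi> has_derivative (\<lambda>h. Dx \<bullet> h)) (at x)" and d: "d > 0"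
    and le: "\<forall>h. 0 < h \<and> h < d \<longrightarrow> \<phi> x \<le> \<phi> (x - h *\<^sub>R v)"
  shows "Dx \<bullet> v \<le> 0"
proof (rule ccontr)
  assume neg: "\<not> Dx \<bullet> v \<le> 0"
  have l: "((\<lambda>h::real. x - h *\<^sub>R v) has_derivative (\<lambda>h. - (h *\<^sub>R v))) (at 0)"
    by (auto intro!: derivative_eq_intros)
  have c: "((\<lambda>h::real. \<phi> (x - h *\<^sub>R v)) has_derivative (\<lambda>h. Dx \<bullet> (- (h *\<^sub>R v)))) (at 0)"
  proof -
    have D': "(\<phi> has_derivative (\<lambda>h. Dx \<bullet> h)) (at (x - (0::real) *\<^sub>R v))" using D by simp
    show ?thesis using has_derivative_compose[OF l D'] by simp
  qed
  have eq: "(*) (- (Dx \<bullet> v)) = (\<lambda>h::real. Dx \<bullet> (- (h *\<^sub>R v)))"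
    by (auto simp: fun_eq_iff)
  have "((\<lambda>h::real. \<phi> (x - h *\<^sub>R v)) has_real_derivative (- (Dx \<bullet> v))) (at 0)"
    unfolding has_field_derivative_def eq by (rule c)
  from DERIV_neg_dec_right[OF this] neg obtain d' where d': "d' > 0"
    "\<forall>h>0. h < d' \<longrightarrow> \<phi> (x - (0 + h) *\<^sub>R v) < \<phi> (x - 0 *\<^sub>R v)" by auto
  define h where "h = min d d' / 2"
  have h: "h > 0" "h < d" "h < d'" using d d' by (auto simp: h_def)
  then have "\<phi> (x - h *\<^sub>R v) < \<phi> x" using d'(2) by simp
  moreover have "\<phi> x \<le> \<phi> (x - h *\<^sub>R v)" using le h by blast
  ultimately show False by simp
qed

lemma deriv_dir2:
  fixes \<phi> :: "'a::euclidean_space \<Rightarrow> real"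
  assumes D: "(\<phi> has_derivative (\<lambda>h. Dx \<bullet> h)) (at x)" and d: "d > 0"
    and le: "\<forall>h. 0 < h \<and> h < d \<longrightarrow> \<phi> (x - h *\<^sub>R v) \<le> \<phi> x"
  shows "Dx \<bullet> v \<ge> 0"
proof -
  have "((\<lambda>y. - \<phi> y) has_derivative (\<lambda>h. - (Dx \<bullet> h))) (at x)"
    using has_derivative_minus[OF D] .
  then have D': "((\<lambda>y. - \<phi> y) has_derivative (\<lambda>h. (- Dx) \<bullet> h)) (at x)" by simp
  have "(- Dx) \<bullet> v \<le> 0" using deriv_dir[OF D' d] le by auto
  then show ?thesis by simp
qed

lemma env_mono:
  assumes star: "star_shaped_set \<Omega> xs" and g: "continuous_on \<Omega> g" and x: "x \<in> \<Omega>"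
    and y: "y \<in> closed_segment xs x"
  shows "env xs g y \<le> env xs g x"
proof -
  have yO: "y \<in> \<Omega>" using seg_in[OF star x y] .
  obtain z where z: "z \<in> closed_segment xs y" "g z = env xs g y" using env_max[OF star g yO] by auto
  have "closed_segment xs y \<subseteq> closed_segment xs x" using y by (simp add: subset_closed_segment)
  then show ?thesis using z env_max[OF star g x] by force
qed

lemma inward_seg:
  assumes "0 \<le> h" "h \<le> 1"
  shows "x - h *\<^sub>R (x - xs) \<in> closed_segment xs x"
  unfolding in_segment using assms by (intro exI[of _ "1 - h"]) (auto simp: algebra_simps)

theorem proposition3p12:
  fixes \<Omega> :: "'a::euclidean_space set" and xs :: 'a and g :: "'a \<Rightarrow> real"
  assumes "open \<Omega>" and "connected \<Omega>" and "bounded \<Omega>"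
    and "xs \<in> \<Omega>" and "star_shaped_set \<Omega> xs"
    and "continuous_on \<Omega> g"
  shows "visc_sol \<Omega> (F_obst g xs) (SS_plus \<Omega> xs g) \<and> SS_plus \<Omega> xs g xs = g xs"
proof -
  note op = assms(1) and star = assms(5) and g = assms(6)
  define u where "u = SS_plus \<Omega> xs g"
  have ue: "u y = env xs g y" if "y \<in> \<Omega>" for y
    unfolding u_def using SS_eq[OF star g that] .
  have cont: "\<exists>d>0. \<forall>y\<in>\<Omega>. y \<noteq> x \<and> dist y x < d \<longrightarrow> \<bar>u y - u x\<bar> < e"
    if "x \<in> \<Omega>" "e > 0" for x e
    using env_cont[OF op star g that] ue that by auto
  have usc: "usc_on \<Omega> u" unfolding usc_on_def eventually_at
  proof (intro ballI allI impI)
    fix x a assume x: "x \<in> \<Omega>" and a: "u x < a"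
    from cont[OF x, of "a - u x"] a obtain d where "d > 0"
      "\<forall>y\<in>\<Omega>. y \<noteq> x \<and> dist y x < d \<longrightarrow> \<bar>u y - u x\<bar> < a - u x" by auto
    then show "\<exists>d>0. \<forall>y\<in>\<Omega>. y \<noteq> x \<and> dist y x < d \<longrightarrow> u y < a" by force
  qed
  have lsc: "lsc_on \<Omega> u" unfolding lsc_on_def eventually_at
  proof (intro ballI allI impI)
    fix x a assume x: "x \<in> \<Omega>" and a: "a < u x"
    from cont[OF x, of "u x - a"] a obtain d where "d > 0"
      "\<forall>y\<in>\<Omega>. y \<noteq> x \<and> dist y x < d \<longrightarrow> \<bar>u y - u x\<bar> < u x - a" by auto
    then show "\<exists>d>0. \<forall>y\<in>\<Omega>. y \<noteq> x \<and> dist y x < d \<longrightarrow> a < u y" by force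
  qed
  have inO: "x - h *\<^sub>R (x - xs) \<in> \<Omega>" if "x \<in> \<Omega>" "0 \<le> h" "h \<le> 1" for x h
    using seg_in[OF star that(1) inward_seg[OF that(2,3)]] .
  have dist_in: "dist (x - h *\<^sub>R (x - xs)) x < e"
    if "0 < h" "h < e / (norm (x - xs) + 1)" "e > 0" for x h e
  proof -
    have "dist (x - h *\<^sub>R (x - xs)) x = h * norm (x - xs)" using that by (simp add: dist_norm)
    also have "\<dots> \<le> h * (norm (x - xs) + 1)" using that by simp
    also have "\<dots> < e"
    proof -
      have p: "norm (x - xs) + 1 > 0" by (simp add: add_nonneg_pos)
      show ?thesis using that(2) pos_less_divide_eq[OF p] by simp
    qed
    finally show ?thesis .
  qed
  have sub: "visc_subsol \<Omega> (F_obst g xs) u"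
    unfolding visc_subsol_def
  proof (intro conjI usc allI impI)
    fix \<phi> D\<phi> x
    assume H: "C1_grad \<Omega> \<phi> D\<phi> \<and> x \<in> \<Omega> \<and> local_max_on \<Omega> (\<lambda>y. u y - \<phi> y) x"
    then have x: "x \<in> \<Omega>" and Dx: "(\<phi> has_derivative (\<lambda>h. D\<phi> x \<bullet> h)) (at x)"
      unfolding C1_grad_def by auto
    obtain e where e: "e > 0" "\<forall>y\<in>\<Omega> \<inter> ball x e. u y - \<phi> y \<le> u x - \<phi> x"
      using H unfolding local_max_on_def by auto
    show "F_obst g xs x (u x) (D\<phi> x) \<le> 0"
    proof (cases "u x \<le> g x")
      case True then show ?thesis unfolding F_obst_def by simp
    next
      case False
      obtain z where z: "z \<in> closed_segment xs x" "g z = env xs g x" using env_max[OF star g x] by auto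
      obtain s where s: "0 \<le> s" "s \<le> 1" "z = (1 - s) *\<^sub>R xs + s *\<^sub>R x" using z unfolding in_segment by auto
      have "s \<noteq> 1" using False z s ue[OF x] by auto
      with s have s1: "s < 1" by simp
      define d where "d = min (1 - s) (e / (norm (x - xs) + 1))"
      have d: "d > 0" using s1 e by (simp add: d_def add_nonneg_pos)
      have "\<forall>h. 0 < h \<and> h < d \<longrightarrow> \<phi> x \<le> \<phi> (x - h *\<^sub>R (x - xs))"
      proof (intro allI impI)
        fix h assume h: "0 < h \<and> h < d"
        define y where "y = x - h *\<^sub>R (x - xs)"
        have h1: "h < 1 - s" "h < e / (norm (x - xs) + 1)" using h by (auto simp: d_def)
        have yO: "y \<in> \<Omega>" unfolding y_def using inO[OF x] h h1 s by auto
        have yb: "y \<in> ball x e" unfolding y_def using dist_in[OF _ h1(2) e(1)] h by (simp add: dist_commute)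
        have zy: "z \<in> closed_segment xs y"
          unfolding in_segment
        proof (intro exI[of _ "s / (1 - h)"] conjI)
          show "0 \<le> s / (1 - h)" using s h1 by simp
          show "s / (1 - h) \<le> 1" using s h1 by simp
          have "1 - h \<noteq> 0" using h1 s by simp
          then show "z = (1 - s / (1 - h)) *\<^sub>R xs + (s / (1 - h)) *\<^sub>R y"
          proof -
            define c where "c = s / (1 - h)"
            have c1: "c * (1 - h) = s" unfolding c_def using \<open>1 - h \<noteq> 0\<close> by simp
            have "(1 - c) *\<^sub>R xs + c *\<^sub>R (x - h *\<^sub>R (x - xs)) = (1 - c * (1 - h)) *\<^sub>R xs + (c * (1 - h)) *\<^sub>R x"
              by (simp add: algebra_simps)
            then show ?thesis unfolding s(3) y_def c_def[symmetric] c1 by simp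
          qed
        qed
        have "g z \<le> env xs g y" using env_max[OF star g yO] zy by auto
        then have "u x \<le> u y" using z ue[OF x] ue[OF yO] by simp
        moreover have "u y - \<phi> y \<le> u x - \<phi> x" using e(2) yO yb by auto
        ultimately show "\<phi> x \<le> \<phi> (x - h *\<^sub>R (x - xs))" unfolding y_def by simp
      qed
      from deriv_dir[OF Dx d this] show ?thesis unfolding F_obst_def by (simp add: inner_commute)
    qed
  qed
  have super: "visc_supersol \<Omega> (F_obst g xs) u"
    unfolding visc_supersol_def
  proof (intro conjI lsc allI impI)
    fix \<phi> D\<phi> x
    assume H: "C1_grad \<Omega> \<phi> D\<phi> \<and> x \<in> \<Omega> \<and> local_min_on \<Omega> (\<lambda>y. u y - \<phi> y) x"
    then have x: "x \<in> \<Omega>" and Dx: "(\<phi> has_derivative (\<lambda>h. D\<phi> x \<bullet> h)) (at x)"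
      unfolding C1_grad_def by auto
    obtain e where e: "e > 0" "\<forall>y\<in>\<Omega> \<inter> ball x e. u x - \<phi> x \<le> u y - \<phi> y"
      using H unfolding local_min_on_def by auto
    define d where "d = min 1 (e / (norm (x - xs) + 1))"
    have d: "d > 0" using e by (simp add: d_def add_nonneg_pos)
    have "\<forall>h. 0 < h \<and> h < d \<longrightarrow> \<phi> (x - h *\<^sub>R (x - xs)) \<le> \<phi> x"
    proof (intro allI impI)
      fix h assume h: "0 < h \<and> h < d"
      define y where "y = x - h *\<^sub>R (x - xs)"
      have h1: "h < 1" "h < e / (norm (x - xs) + 1)" using h by (auto simp: d_def)
      have yO: "y \<in> \<Omega>" unfolding y_def using inO[OF x] h h1 by auto
      have yb: "y \<in> ball x e" unfolding y_def using dist_in[OF _ h1(2) e(1)] h by (simp add: dist_commute)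
      have "env xs g y \<le> env xs g x" using env_mono[OF star g x] inward_seg[of h x xs] h h1
        unfolding y_def by auto
      then have "u y \<le> u x" using ue[OF x] ue[OF yO] by simp
      moreover have "u x - \<phi> x \<le> u y - \<phi> y" using e(2) yO yb by auto
      ultimately show "\<phi> (x - h *\<^sub>R (x - xs)) \<le> \<phi> x" unfolding y_def by simp
    qed
    from deriv_dir2[OF Dx d this] have "0 \<le> (x - xs) \<bullet> D\<phi> x" by (simp add: inner_commute)
    moreover have "g x \<le> u x" using env_max[OF star g x] ue[OF x] ends_in_segment(2)[of xs x] by auto
    ultimately show "F_obst g xs x (u x) (D\<phi> x) \<ge> 0" unfolding F_obst_def by simp
  qed
  have "u xs = g xs"
    using ue[OF assms(4)] unfolding env_def by simp
  then show ?thesis using sub super unfolding visc_sol_def u_def by simp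
qed

end
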